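(* Let $(X,d,\ll,\le,\tau)$ be a regularly localizable Lorentzian pre-length space and let $\gamma:[a,b]\to X$ be a future-directed causal curve such that for some $a\le c<d\le b$ the restriction $\gamma|_{[c,d]}$ is rectifiable. Then there exists a future-directed timelike curve from $\gamma(a)$ to $\gamma(b)$. If $X$ is even SR-localizable, then this curve can be chosen to lie in any given neighborhood of $\gamma([a,b])$.
   Context: A causal space $(X,\ll,\le)$: $\le$ reflexive and transitive, $\ll$ transitive, $x\ll y\Rightarrow x\le y$; $x<y$ means $x\le y,x\ne y$; $I^\pm$ chronological future/past. A Lorentzian pre-length space $(X,d,\ll,\le,\tau)$ is a causal space with a metric $d$ and $\tau:X\times X\to[0,\infty]$ lower semicontinuous w.r.t. $d$, with $\tau(x,z)\ge\tau(x,y)+\tau(y,z)$ for $x\le y\le z$, $\tau(x,y)=0$ if $x\not\le y$, $\tau(x,y)>0\iff x\ll y$. Future-directed causal (timelike) curve: non-constant, $d$-locally Lipschitz $\gamma:I\to X$ with $\gamma(t_1)\le\gamma(t_2)$ (resp. $\ll$) for $t_1<t_2$; null if no two of its points are $\ll$-related; contains a null segment if null on a non-trivial subinterval. $L_\tau(\gamma)=\inf\sum_i\tau(\gamma(t_i),\gamma(t_{i+1}))$ over partitions of its domain; $\gamma$ is rectifiable if $L_\tau(\gamma|_{[t_1,t_2]})>0$ for all $t_1<t_2$ in its domain. $L^d$ is $d$-arclength. For an open set $\Omega$ consider: (a) some $C>0$ bounds $L^d$ of every causal curve in $\Omega$; (b) there is a continuous $\omega:\Omega\times\Omega\to[0,\infty)$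 making $\Omega$ with restricted $d,\ll,\le$ a Lorentzian pre-length space, with $I^\pm(y)\cap\Omega\ne\emptyset$ for all $y\in\Omega$; (c) for $p<q$ in $\Omega$ there is a future-directed causal curve $\gamma_{p,q}$ from $p$ to $q$ in $\Omega$ with $L_\tau(\gamma_{p,q})\ge L_\tau(\lambda)$ for all future-directed causal $\lambda$ from $p$ to $q$ in $\Omega$ and $L_\tau(\gamma_{p,q})=\omega(p,q)\le\tau(p,q)$; (d) whenever $p\ll q$ in $\Omega$, $\gamma_{p,q}$ is timelike and strictly longer than any future-directed causal curve in $\Omega$ from $p$ to $q$ containing a null segment. $X$ is regularly localizable if every point has an open neighborhood with (a)–(d), and SR-localizable if every point has a neighborhood basis of open sets with (a)–(d). *)

theory Defs
  imports "HOL-Analysis.Analysis"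
begin

text \<open>The metric d of the space is the metric dist of the type 'a :: metric_space.
  The time separation tau takes values in [0,\<infinity>], rendered as ennreal.\<close>

definition causal_space_on :: "'a set \<Rightarrow> ('a \<Rightarrow> 'a \<Rightarrow> bool) \<Rightarrow> ('a \<Rightarrow> 'a \<Rightarrow> bool) \<Rightarrow> bool" where
  "causal_space_on S ll le \<longleftrightarrow>
     (\<forall>x\<in>S. le x x) \<and>
     (\<forall>x\<in>S. \<forall>y\<in>S. \<forall>z\<in>S. le x y \<and> le y z \<longrightarrow> le x z) \<and>
     (\<forall>x\<in>S. \<forall>y\<in>S. \<forall>z\<in>S. ll x y \<and> ll y z \<longrightarrow> ll x z) \<and>
     (\<forall>x\<in>S. \<forall>y\<in>S. ll x y \<longrightarrow> le x y)"

definition lsc_on :: "'b::topological_space set \<Rightarrow> ('b \<Rightarrow> ennreal) \<Rightarrow> bool" where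
  "lsc_on S f \<longleftrightarrow> (\<forall>z\<in>S. \<forall>c. c < f z \<longrightarrow> (\<forall>\<^sub>F w in at z within S. c < f w))"

definition lpls_on :: "'a::metric_space set \<Rightarrow> ('a \<Rightarrow> 'a \<Rightarrow> bool) \<Rightarrow> ('a \<Rightarrow> 'a \<Rightarrow> bool)
    \<Rightarrow> ('a \<Rightarrow> 'a \<Rightarrow> ennreal) \<Rightarrow> bool" where
  "lpls_on S ll le tau \<longleftrightarrow>
     causal_space_on S ll le \<and>
     lsc_on (S \<times> S) (\<lambda>(x, y). tau x y) \<and>
     (\<forall>x\<in>S. \<forall>y\<in>S. \<forall>z\<in>S. le x y \<and> le y z \<longrightarrow> tau x y + tau y z \<le> tau x z) \<and>
     (\<forall>x\<in>S. \<forall>y\<in>S. \<not> le x y \<longrightarrow> tau x y = 0) \<and>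
     (\<forall>x\<in>S. \<forall>y\<in>S. 0 < tau x y \<longleftrightarrow> ll x y)"

definition loc_lipschitz_on :: "real set \<Rightarrow> (real \<Rightarrow> 'a::metric_space) \<Rightarrow> bool" where
  "loc_lipschitz_on I \<gamma> \<longleftrightarrow>
     (\<forall>t\<in>I. \<exists>e>0. \<exists>L. \<forall>s\<in>I \<inter> ball t e. \<forall>s'\<in>I \<inter> ball t e.
        dist (\<gamma> s) (\<gamma> s') \<le> L * dist s s')"

definition fd_causal_curve :: "('a::metric_space \<Rightarrow> 'a \<Rightarrow> bool) \<Rightarrow> (real \<Rightarrow> 'a) \<Rightarrow> real \<Rightarrow> real \<Rightarrow> bool" where
  "fd_causal_curve le \<gamma> a b \<longleftrightarrow>
     (\<exists>s\<in>{a..b}. \<exists>t\<in>{a..b}. \<gamma> s \<noteq> \<gamma> t) \<and>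
     loc_lipschitz_on {a..b} \<gamma> \<and>
     (\<forall>s t. a \<le> s \<and> s < t \<and> t \<le> b \<longrightarrow> le (\<gamma> s) (\<gamma> t))"

definition fd_timelike_curve :: "('a::metric_space \<Rightarrow> 'a \<Rightarrow> bool) \<Rightarrow> (real \<Rightarrow> 'a) \<Rightarrow> real \<Rightarrow> real \<Rightarrow> bool" where
  "fd_timelike_curve ll \<gamma> a b \<longleftrightarrow>
     (\<exists>s\<in>{a..b}. \<exists>t\<in>{a..b}. \<gamma> s \<noteq> \<gamma> t) \<and>
     loc_lipschitz_on {a..b} \<gamma> \<and>
     (\<forall>s t. a \<le> s \<and> s < t \<and> t \<le> b \<longrightarrow> ll (\<gamma> s) (\<gamma> t))"

definition is_partition :: "real \<Rightarrow> real \<Rightarrow> nat \<Rightarrow> (nat \<Rightarrow> real) \<Rightarrow> bool" where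
  "is_partition a b n t \<longleftrightarrow> t 0 = a \<and> t n = b \<and> (\<forall>i<n. t i < t (Suc i))"

definition L_tau :: "('a \<Rightarrow> 'a \<Rightarrow> ennreal) \<Rightarrow> (real \<Rightarrow> 'a) \<Rightarrow> real \<Rightarrow> real \<Rightarrow> ennreal" where
  "L_tau tau \<gamma> a b =
     Inf {(\<Sum>i<n. tau (\<gamma> (t i)) (\<gamma> (t (Suc i)))) | n t. is_partition a b n t}"

definition L_d :: "(real \<Rightarrow> 'a::metric_space) \<Rightarrow> real \<Rightarrow> real \<Rightarrow> ennreal" where
  "L_d \<gamma> a b =
     Sup {(\<Sum>i<n. ennreal (dist (\<gamma> (t i)) (\<gamma> (t (Suc i))))) | n t. is_partition a b n t}"

definition rectifiable_on :: "('a \<Rightarrow> 'a \<Rightarrow> ennreal) \<Rightarrow> (real \<Rightarrow> 'a) \<Rightarrow> real \<Rightarrow> real \<Rightarrow> bool" where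
  "rectifiable_on tau \<gamma> a b \<longleftrightarrow>
     (\<forall>t1 t2. a \<le> t1 \<and> t1 < t2 \<and> t2 \<le> b \<longrightarrow> 0 < L_tau tau \<gamma> t1 t2)"

definition contains_null_segment :: "('a::metric_space \<Rightarrow> 'a \<Rightarrow> bool) \<Rightarrow> ('a \<Rightarrow> 'a \<Rightarrow> bool)
    \<Rightarrow> (real \<Rightarrow> 'a) \<Rightarrow> real \<Rightarrow> real \<Rightarrow> bool" where
  "contains_null_segment ll le \<gamma> a b \<longleftrightarrow>
     (\<exists>s1 s2. a \<le> s1 \<and> s1 < s2 \<and> s2 \<le> b \<and> fd_causal_curve le \<gamma> s1 s2 \<and>
        (\<forall>t\<in>{s1..s2}. \<forall>t'\<in>{s1..s2}. \<not> ll (\<gamma> t) (\<gamma> t')))"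

definition good_nbhd :: "('a::metric_space \<Rightarrow> 'a \<Rightarrow> bool) \<Rightarrow> ('a \<Rightarrow> 'a \<Rightarrow> bool)
    \<Rightarrow> ('a \<Rightarrow> 'a \<Rightarrow> ennreal) \<Rightarrow> 'a set \<Rightarrow> bool" where
  "good_nbhd ll le tau \<Omega> \<longleftrightarrow> open \<Omega> \<and>
     \<comment> \<open>(a)\<close>
     (\<exists>C>0. \<forall>\<gamma> a b. fd_causal_curve le \<gamma> a b \<and> \<gamma> ` {a..b} \<subseteq> \<Omega> \<longrightarrow> L_d \<gamma> a b \<le> ennreal C) \<and>
     (\<exists>\<omega> :: 'a \<Rightarrow> 'a \<Rightarrow> real.
        \<comment> \<open>(b)\<close>
        (\<forall>x\<in>\<Omega>. \<forall>y\<in>\<Omega>. 0 \<le> \<omega> x y) \<and>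
        continuous_on (\<Omega> \<times> \<Omega>) (\<lambda>(x, y). \<omega> x y) \<and>
        lpls_on \<Omega> ll le (\<lambda>x y. ennreal (\<omega> x y)) \<and>
        (\<forall>y\<in>\<Omega>. (\<exists>x\<in>\<Omega>. ll y x) \<and> (\<exists>x\<in>\<Omega>. ll x y)) \<and>
        \<comment> \<open>(c) and (d)\<close>
        (\<forall>p\<in>\<Omega>. \<forall>q\<in>\<Omega>. le p q \<and> p \<noteq> q \<longrightarrow>
           (\<exists>\<gamma> a b. fd_causal_curve le \<gamma> a b \<and> \<gamma> a = p \<and> \<gamma> b = q \<and> \<gamma> ` {a..b} \<subseteq> \<Omega> \<and>
              (\<forall>\<eta> a' b'. fd_causal_curve le \<eta> a' b' \<and> \<eta> a' = p \<and> \<eta> b' = q \<and> \<eta> ` {a'..b'} \<subseteq> \<Omega>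
                  \<longrightarrow> L_tau tau \<eta> a' b' \<le> L_tau tau \<gamma> a b) \<and>
              L_tau tau \<gamma> a b = ennreal (\<omega> p q) \<and>
              ennreal (\<omega> p q) \<le> tau p q \<and>
              (ll p q \<longrightarrow>
                 fd_timelike_curve ll \<gamma> a b \<and>
                 (\<forall>\<eta> a' b'. fd_causal_curve le \<eta> a' b' \<and> \<eta> a' = p \<and> \<eta> b' = q \<and> \<eta> ` {a'..b'} \<subseteq> \<Omega>
                     \<and> contains_null_segment ll le \<eta> a' b'
                   \<longrightarrow> L_tau tau \<eta> a' b' < L_tau tau \<gamma> a b)))))"

definition regularly_localizable :: "('a::metric_space \<Rightarrow> 'a \<Rightarrow> bool) \<Rightarrow> ('a \<Rightarrow> 'a \<Rightarrow> bool)
    \<Rightarrow> ('a \<Rightarrow> 'a \<Rightarrow> ennreal) \<Rightarrow> bool" where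
  "regularly_localizable ll le tau \<longleftrightarrow> (\<forall>x. \<exists>\<Omega>. x \<in> \<Omega> \<and> good_nbhd ll le tau \<Omega>)"

definition SR_localizable :: "('a::metric_space \<Rightarrow> 'a \<Rightarrow> bool) \<Rightarrow> ('a \<Rightarrow> 'a \<Rightarrow> bool)
    \<Rightarrow> ('a \<Rightarrow> 'a \<Rightarrow> ennreal) \<Rightarrow> bool" where
  "SR_localizable ll le tau \<longleftrightarrow>
     (\<forall>x U. open U \<and> x \<in> U \<longrightarrow> (\<exists>\<Omega>. x \<in> \<Omega> \<and> \<Omega> \<subseteq> U \<and> good_nbhd ll le tau \<Omega>))"

end

theory Submission
  imports Defs
begin


lemma lp_facts:
  assumes "lpls_on UNIV ll le tau"
  shows lp_refl: "le x x"
    and lp_trans: "le x y \<Longrightarrow> le y z \<Longrightarrow> le x z"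
    and lp_lltrans: "ll x y \<Longrightarrow> ll y z \<Longrightarrow> ll x z"
    and lp_llle: "ll x y \<Longrightarrow> le x y"
    and lp_pos: "0 < tau x y \<longleftrightarrow> ll x y"
    and lp_tri: "le x y \<Longrightarrow> le y z \<Longrightarrow> tau x y + tau y z \<le> tau x z"
proof -
  note H = assms[unfolded lpls_on_def causal_space_on_def]
  note C = conjunct1[OF H]
  note R = conjunct2[OF conjunct2[OF H]]
  note refl = conjunct1[OF C, rule_format]
  note tr = conjunct1[OF conjunct2[OF C], rule_format]
  note lltr = conjunct1[OF conjunct2[OF conjunct2[OF C]], rule_format]
  note llle = conjunct2[OF conjunct2[OF conjunct2[OF C]], rule_format]
  note pos = conjunct2[OF conjunct2[OF R], rule_format]
  note tri = conjunct1[OF R, rule_format]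
  show "le x x" by (rule refl) simp
  show "le x y \<Longrightarrow> le y z \<Longrightarrow> le x z" by (rule tr[of x y z]) simp_all
  show "ll x y \<Longrightarrow> ll y z \<Longrightarrow> ll x z" by (rule lltr[of x y z]) simp_all
  show "ll x y \<Longrightarrow> le x y" by (rule llle[of x y]) simp_all
  show "0 < tau x y \<longleftrightarrow> ll x y" by (rule pos[of x y]) simp_all
  show "le x y \<Longrightarrow> le y z \<Longrightarrow> tau x y + tau y z \<le> tau x z" by (rule tri[of x y z]) simp_all
qed

lemma lp_le_ll:
  assumes "lpls_on UNIV ll le tau" "le x y" "ll y z"
  shows "ll x z"
proof -
  have "le y z" using lp_llle[OF assms(1) assms(3)] .
  have "0 < tau y z" using lp_pos[OF assms(1)] assms(3) by simp
  also have "tau y z \<le> tau x y + tau y z" by simp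
  also have "\<dots> \<le> tau x z" using lp_tri[OF assms(1) assms(2) \<open>le y z\<close>] .
  finally show ?thesis using lp_pos[OF assms(1)] by simp
qed

lemma lp_ll_le:
  assumes "lpls_on UNIV ll le tau" "ll x y" "le y z"
  shows "ll x z"
proof -
  have "le x y" using lp_llle[OF assms(1) assms(2)] .
  have "0 < tau x y" using lp_pos[OF assms(1)] assms(2) by simp
  also have "tau x y \<le> tau x y + tau y z" by simp
  also have "\<dots> \<le> tau x z" using lp_tri[OF assms(1) \<open>le x y\<close> assms(3)] .
  finally show ?thesis using lp_pos[OF assms(1)] by simp
qed


lemma loc_lip_subset:
  assumes "loc_lipschitz_on J f" "I \<subseteq> J"
  shows "loc_lipschitz_on I f"
  unfolding loc_lipschitz_on_def
proof
  fix t assume "t \<in> I"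
  then obtain e L where "e > 0" "\<forall>s\<in>J \<inter> ball t e. \<forall>s'\<in>J \<inter> ball t e. dist (f s) (f s') \<le> L * dist s s'"
    using assms unfolding loc_lipschitz_on_def by blast
  then show "\<exists>e>0. \<exists>L. \<forall>s\<in>I \<inter> ball t e. \<forall>s'\<in>I \<inter> ball t e. dist (f s) (f s') \<le> L * dist s s'"
    using assms(2) by blast
qed

lemma loc_lip_cong:
  assumes "loc_lipschitz_on I f" "\<And>x. x \<in> I \<Longrightarrow> f x = g x"
  shows "loc_lipschitz_on I g"
  using assms unfolding loc_lipschitz_on_def by (metis IntD1)

lemma loc_lip_cont:
  assumes "loc_lipschitz_on I f"
  shows "continuous_on I f"
  unfolding continuous_on_iff
proof (intro ballI allI impI)
  fix x and eps :: real assume x: "x \<in> I" and eps: "eps > 0"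
  then obtain e L where e: "e > 0" and L: "\<forall>s\<in>I \<inter> ball x e. \<forall>s'\<in>I \<inter> ball x e. dist (f s) (f s') \<le> L * dist s s'"
    using assms unfolding loc_lipschitz_on_def by blast
  define del where "del = min e (eps / (\<bar>L\<bar> + 1))"
  have del: "del > 0" using e eps by (simp add: del_def)
  show "\<exists>d>0. \<forall>x'\<in>I. dist x' x < d \<longrightarrow> dist (f x') (f x) < eps"
  proof (intro exI[of _ del] conjI ballI impI del)
    fix y assume y: "y \<in> I" "dist y x < del"
    have yb: "y \<in> ball x e" using y del_def by (simp add: dist_commute)
    have "dist (f y) (f x) \<le> L * dist y x" using L y x yb e by auto
    also have "\<dots> \<le> \<bar>L\<bar> * dist y x" by (simp add: mult_right_mono)
    also have "\<dots> \<le> \<bar>L\<bar> * del" using y by (simp add: mult_left_mono)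
    also have "\<dots> < eps"
    proof -
      have "\<bar>L\<bar> * del \<le> \<bar>L\<bar> * (eps / (\<bar>L\<bar> + 1))" unfolding del_def by (rule mult_left_mono) auto
      also have "\<dots> < eps" using eps by (simp add: field_simps)
      finally show ?thesis .
    qed
    finally show "dist (f y) (f x) < eps" .
  qed
qed

lemma loc_lip_shift:
  assumes "loc_lipschitz_on {s2..t2} g"
  shows "loc_lipschitz_on {t1..t1 + (t2 - s2)} (\<lambda>u. g (u - t1 + s2))"
  unfolding loc_lipschitz_on_def
proof
  fix t assume t: "t \<in> {t1..t1 + (t2 - s2)}"
  then have "t - t1 + s2 \<in> {s2..t2}" by auto
  then obtain e L where e: "e > 0" and L: "\<forall>s\<in>{s2..t2} \<inter> ball (t - t1 + s2) e. \<forall>s'\<in>{s2..t2} \<inter> ball (t - t1 + s2) e. dist (g s) (g s') \<le> L * dist s s'"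
    using assms unfolding loc_lipschitz_on_def by blast
  show "\<exists>e>0. \<exists>L. \<forall>s\<in>{t1..t1 + (t2 - s2)} \<inter> ball t e. \<forall>s'\<in>{t1..t1 + (t2 - s2)} \<inter> ball t e. dist (g (s - t1 + s2)) (g (s' - t1 + s2)) \<le> L * dist s s'"
  proof -
    have "\<forall>s\<in>{t1..t1 + (t2 - s2)} \<inter> ball t e. \<forall>s'\<in>{t1..t1 + (t2 - s2)} \<inter> ball t e. dist (g (s - t1 + s2)) (g (s' - t1 + s2)) \<le> L * dist s s'"
    proof (intro ballI)
    fix s s' assume s: "s \<in> {t1..t1 + (t2 - s2)} \<inter> ball t e" and s': "s' \<in> {t1..t1 + (t2 - s2)} \<inter> ball t e"
    have 1: "s - t1 + s2 \<in> {s2..t2} \<inter> ball (t - t1 + s2) e" using s by (auto simp: dist_real_def)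
    have 2: "s' - t1 + s2 \<in> {s2..t2} \<inter> ball (t - t1 + s2) e" using s' by (auto simp: dist_real_def)
    have "dist (s - t1 + s2) (s' - t1 + s2) = dist s s'" by (simp add: dist_real_def)
    then show "dist (g (s - t1 + s2)) (g (s' - t1 + s2)) \<le> L * dist s s'" using L 1 2 by metis
    qed
    then show ?thesis using e by blast
  qed
qed



lemma loc_lip_glue:
  assumes l: "loc_lipschitz_on {s1..t1} f" and r: "loc_lipschitz_on {t1..T} f"
    and "s1 \<le> t1" "t1 \<le> T"
  shows "loc_lipschitz_on {s1..T} f"
  unfolding loc_lipschitz_on_def
proof
  fix t assume t: "t \<in> {s1..T}"
  consider "t < t1" | "t > t1" | "t = t1" by linarith
  then show "\<exists>e>0. \<exists>L. \<forall>s\<in>{s1..T} \<inter> ball t e. \<forall>s'\<in>{s1..T} \<inter> ball t e. dist (f s) (f s') \<le> L * dist s s'"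
  proof cases
    case 1
    then have "t \<in> {s1..t1}" using t by auto
    then obtain e L where e: "e > 0" and L: "\<forall>s\<in>{s1..t1} \<inter> ball t e. \<forall>s'\<in>{s1..t1} \<inter> ball t e. dist (f s) (f s') \<le> L * dist s s'"
      using l unfolding loc_lipschitz_on_def by blast
    have sub: "{s1..T} \<inter> ball t (min e (t1 - t)) \<subseteq> {s1..t1} \<inter> ball t e"
      by (auto simp: dist_real_def)
    have "min e (t1 - t) > 0" using e 1 by simp
    then show ?thesis using L sub by (intro exI[of _ "min e (t1 - t)"]) blast
  next
    case 2
    then have "t \<in> {t1..T}" using t by auto
    then obtain e L where e: "e > 0" and L: "\<forall>s\<in>{t1..T} \<inter> ball t e. \<forall>s'\<in>{t1..T} \<inter> ball t e. dist (f s) (f s') \<le> L * dist s s'"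
      using r unfolding loc_lipschitz_on_def by blast
    have sub: "{s1..T} \<inter> ball t (min e (t - t1)) \<subseteq> {t1..T} \<inter> ball t e"
      by (auto simp: dist_real_def)
    have "min e (t - t1) > 0" using e 2 by simp
    then show ?thesis using L sub by (intro exI[of _ "min e (t - t1)"]) blast
  next
    case 3
    obtain e1 L1 where e1: "e1 > 0" and L1: "\<forall>s\<in>{s1..t1} \<inter> ball t e1. \<forall>s'\<in>{s1..t1} \<inter> ball t e1. dist (f s) (f s') \<le> L1 * dist s s'"
      using l[unfolded loc_lipschitz_on_def, rule_format, of t] 3 assms(3) by auto
    obtain e2 L2 where e2: "e2 > 0" and L2: "\<forall>s\<in>{t1..T} \<inter> ball t e2. \<forall>s'\<in>{t1..T} \<inter> ball t e2. dist (f s) (f s') \<le> L2 * dist s s'"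
      using r[unfolded loc_lipschitz_on_def, rule_format, of t] 3 assms(4) by auto
    define e where "e = min e1 e2"
    define L where "L = max (max L1 L2) 0"
    have e: "e > 0" using e1 e2 e_def by simp
    have key: "dist (f s) (f s') \<le> L * dist s s'" if s: "s \<in> {s1..T} \<inter> ball t e" and s': "s' \<in> {s1..T} \<inter> ball t e" and le: "s \<le> s'" for s s'
    proof -
      have tb1: "t1 \<in> {s1..t1} \<inter> ball t e1" using 3 e1 assms by auto
      have tb2: "t1 \<in> {t1..T} \<inter> ball t e2" using 3 e2 assms by auto
      consider "s' \<le> t1" | "t1 \<le> s" | "s < t1 \<and> t1 < s'" by linarith
      then show ?thesis
      proof cases
        case 1
        then have "s \<in> {s1..t1} \<inter> ball t e1" "s' \<in> {s1..t1} \<inter> ball t e1" using s s' le e_def by auto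
        then have "dist (f s) (f s') \<le> L1 * dist s s'" using L1 by blast
        also have "\<dots> \<le> L * dist s s'" unfolding L_def by (rule mult_right_mono) auto
        finally show ?thesis .
      next
        case 2
        then have "s \<in> {t1..T} \<inter> ball t e2" "s' \<in> {t1..T} \<inter> ball t e2" using s s' le e_def by auto
        then have "dist (f s) (f s') \<le> L2 * dist s s'" using L2 by blast
        also have "\<dots> \<le> L * dist s s'" unfolding L_def by (rule mult_right_mono) auto
        finally show ?thesis .
      next
        case 4: 3
        then have a1: "s \<in> {s1..t1} \<inter> ball t e1" and a2: "s' \<in> {t1..T} \<inter> ball t e2" using s s' e_def by auto
        have "dist (f s) (f s') \<le> dist (f s) (f t1) + dist (f t1) (f s')" by (rule dist_triangle)
        also have "dist (f s) (f t1) \<le> L1 * dist s t1" using L1 a1 tb1 by blast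
        also have "dist (f t1) (f s') \<le> L2 * dist t1 s'" using L2 a2 tb2 by blast
        also have "L1 * dist s t1 \<le> L * dist s t1" unfolding L_def by (rule mult_right_mono) auto
        also have "L2 * dist t1 s' \<le> L * dist t1 s'" unfolding L_def by (rule mult_right_mono) auto
        also have "L * dist s t1 + L * dist t1 s' = L * dist s s'"
          using 4 by (simp add: dist_real_def distrib_left[symmetric])
        finally show ?thesis by simp
      qed
    qed
    have "\<forall>s\<in>{s1..T} \<inter> ball t e. \<forall>s'\<in>{s1..T} \<inter> ball t e. dist (f s) (f s') \<le> L * dist s s'"
    proof (intro ballI)
      fix s s' assume s: "s \<in> {s1..T} \<inter> ball t e" and s': "s' \<in> {s1..T} \<inter> ball t e"
      show "dist (f s) (f s') \<le> L * dist s s'"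
      proof (cases "s \<le> s'")
        case True then show ?thesis using key s s' by blast
      next
        case False then show ?thesis using key[OF s' s] by (simp add: dist_commute)
      qed
    qed
    then show ?thesis using e by blast
  qed
qed



definition tl_piece :: "('a::metric_space \<Rightarrow> 'a \<Rightarrow> bool) \<Rightarrow> (real \<Rightarrow> 'a) \<Rightarrow> real \<Rightarrow> real \<Rightarrow> bool" where
  "tl_piece ll \<sigma> s t \<longleftrightarrow> s \<le> t \<and> loc_lipschitz_on {s..t} \<sigma> \<and>
     (\<forall>u v. s \<le> u \<and> u < v \<and> v \<le> t \<longrightarrow> ll (\<sigma> u) (\<sigma> v))"

lemma fd_tl_iff:
  "fd_timelike_curve ll \<sigma> s t \<longleftrightarrow> tl_piece ll \<sigma> s t \<and> (\<exists>x\<in>\<sigma>`{s..t}. \<exists>y\<in>\<sigma>`{s..t}. x \<noteq> y)"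
  unfolding fd_timelike_curve_def tl_piece_def by auto

lemma tl_piece_restrict:
  assumes "tl_piece ll \<sigma> s t" "s \<le> s'" "s' \<le> t'" "t' \<le> t"
  shows "tl_piece ll \<sigma> s' t'"
  using assms loc_lip_subset[of "{s..t}" \<sigma> "{s'..t'}"] unfolding tl_piece_def by auto

lemma concat:
  assumes lp: "lpls_on UNIV ll le tau"
    and p1: "tl_piece ll \<sigma>1 s1 t1" and p2: "tl_piece ll \<sigma>2 s2 t2" and j: "\<sigma>1 t1 = \<sigma>2 s2"
  defines "\<sigma> \<equiv> \<lambda>u. if u \<le> t1 then \<sigma>1 u else \<sigma>2 (u - t1 + s2)"
  shows "tl_piece ll \<sigma> s1 (t1 + (t2 - s2))" "\<sigma> s1 = \<sigma>1 s1" "\<sigma> (t1 + (t2 - s2)) = \<sigma>2 t2"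
    "\<sigma> ` {s1..t1+(t2-s2)} = \<sigma>1`{s1..t1} \<union> \<sigma>2`{s2..t2}"
proof -
  have st1: "s1 \<le> t1" and st2: "s2 \<le> t2" using p1 p2 unfolding tl_piece_def by auto
  show "\<sigma> s1 = \<sigma>1 s1" using st1 by (simp add: \<sigma>_def)
  show "\<sigma> (t1 + (t2 - s2)) = \<sigma>2 t2" using j st2 by (auto simp: \<sigma>_def)
  have img2: "\<sigma> ` {t1..t1+(t2-s2)} = \<sigma>2`{s2..t2}"
  proof
    show "\<sigma> ` {t1..t1+(t2-s2)} \<subseteq> \<sigma>2`{s2..t2}"
    proof
      fix x assume "x \<in> \<sigma> ` {t1..t1+(t2-s2)}"
      then obtain u where u: "u \<in> {t1..t1+(t2-s2)}" "x = \<sigma> u" by auto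
      show "x \<in> \<sigma>2`{s2..t2}"
      proof (cases "u \<le> t1")
        case True then have "u = t1" using u by auto
        then show ?thesis using u j st2 by (auto simp: \<sigma>_def)
      next
        case False then show ?thesis using u by (auto simp: \<sigma>_def)
      qed
    qed
  next
    show "\<sigma>2`{s2..t2} \<subseteq> \<sigma> ` {t1..t1+(t2-s2)}"
    proof
      fix x assume "x \<in> \<sigma>2`{s2..t2}"
      then obtain v where v: "v \<in> {s2..t2}" "x = \<sigma>2 v" by auto
      have "\<sigma> (v - s2 + t1) = x" using v j by (auto simp: \<sigma>_def)
      moreover have "v - s2 + t1 \<in> {t1..t1+(t2-s2)}" using v by auto
      ultimately show "x \<in> \<sigma> ` {t1..t1+(t2-s2)}" by force
    qed
  qed
  have img1: "\<sigma> ` {s1..t1} = \<sigma>1`{s1..t1}" by (auto simp: \<sigma>_def)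
  have "{s1..t1+(t2-s2)} = {s1..t1} \<union> {t1..t1+(t2-s2)}" using st1 st2 by auto
  then show "\<sigma> ` {s1..t1+(t2-s2)} = \<sigma>1`{s1..t1} \<union> \<sigma>2`{s2..t2}" using img1 img2 by (simp add: image_Un)
  have ll1: "loc_lipschitz_on {s1..t1} \<sigma>"
    using p1 unfolding tl_piece_def by (auto intro: loc_lip_cong simp: \<sigma>_def)
  have "loc_lipschitz_on {t1..t1 + (t2 - s2)} (\<lambda>u. \<sigma>2 (u - t1 + s2))"
    using p2 unfolding tl_piece_def by (auto intro: loc_lip_shift)
  then have ll2: "loc_lipschitz_on {t1..t1 + (t2 - s2)} \<sigma>"
    by (rule loc_lip_cong) (use j in \<open>auto simp: \<sigma>_def\<close>)
  have lip: "loc_lipschitz_on {s1..t1 + (t2 - s2)} \<sigma>"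
    using loc_lip_glue[OF ll1 ll2] st1 st2 by auto
  have chr: "ll (\<sigma> u) (\<sigma> v)" if "s1 \<le> u" "u < v" "v \<le> t1 + (t2 - s2)" for u v
  proof (cases "v \<le> t1")
    case True then show ?thesis using p1 that unfolding tl_piece_def by (auto simp: \<sigma>_def)
  next
    case False
    then have v: "\<sigma> v = \<sigma>2 (v - t1 + s2)" "s2 < v - t1 + s2" "v - t1 + s2 \<le> t2" using that by (auto simp: \<sigma>_def)
    have A: "ll (\<sigma>2 s2) (\<sigma> v)" using p2 v unfolding tl_piece_def by auto
    show ?thesis
    proof (cases "u \<le> t1")
      case True
      show ?thesis
      proof (cases "u = t1")
        case True then show ?thesis using A j by (simp add: \<sigma>_def)
      next
        case False
        then have "ll (\<sigma>1 u) (\<sigma>1 t1)" using p1 \<open>u \<le> t1\<close> that unfolding tl_piece_def by auto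
        then show ?thesis using A j \<open>u \<le> t1\<close> lp_lltrans[OF lp] by (simp add: \<sigma>_def)
      qed
    next
      case False
      then show ?thesis using p2 that v unfolding tl_piece_def by (auto simp: \<sigma>_def)
    qed
  qed
  show "tl_piece ll \<sigma> s1 (t1 + (t2 - s2))" unfolding tl_piece_def using lip chr st1 st2 by auto
qed



definition gp :: "('a::metric_space \<Rightarrow> 'a \<Rightarrow> bool) \<Rightarrow> 'a set \<Rightarrow> 'a \<Rightarrow> 'a \<Rightarrow> bool" where
  "gp ll U p q \<longleftrightarrow> (\<exists>\<sigma> s t. fd_timelike_curve ll \<sigma> s t \<and> \<sigma> s = p \<and> \<sigma> t = q \<and> \<sigma>`{s..t} \<subseteq> U)"

definition tp :: "('a::metric_space \<Rightarrow> 'a \<Rightarrow> bool) \<Rightarrow> 'a set \<Rightarrow> 'a \<Rightarrow> 'a \<Rightarrow> bool" where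
  "tp ll U p q \<longleftrightarrow> gp ll U p q \<or> (p = q \<and> ll p p)"

lemma gp_mono: "gp ll U p q \<Longrightarrow> U \<subseteq> V \<Longrightarrow> gp ll V p q"
  unfolding gp_def by blast

lemma good_c:
  assumes g: "good_nbhd ll le tau \<Omega>"
  shows "\<forall>p\<in>\<Omega>. \<forall>q\<in>\<Omega>. le p q \<and> p \<noteq> q \<longrightarrow> ll p q \<longrightarrow>
           (\<exists>\<gamma> a b. fd_timelike_curve ll \<gamma> a b \<and> \<gamma> a = p \<and> \<gamma> b = q \<and> \<gamma> ` {a..b} \<subseteq> \<Omega>)"
  using g unfolding good_nbhd_def by (elim conjE exE) fast

lemma good_tl:
  assumes lp: "lpls_on UNIV ll le tau" and g: "good_nbhd ll le tau \<Omega>"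
    and "p \<in> \<Omega>" "q \<in> \<Omega>" "ll p q" "p \<noteq> q"
  shows "gp ll \<Omega> p q"
proof -
  have "le p q" using lp_llle[OF lp assms(5)] .
  then show ?thesis using good_c[OF g] assms(3-6) unfolding gp_def by blast
qed

lemma good_open: "good_nbhd ll le tau \<Omega> \<Longrightarrow> open \<Omega>"
  unfolding good_nbhd_def by (rule conjunct1)

lemma concat_gp:
  assumes lp: "lpls_on UNIV ll le tau"
    and p1: "tl_piece ll \<sigma>1 s1 t1" and p2: "tl_piece ll \<sigma>2 s2 t2" and j: "\<sigma>1 t1 = \<sigma>2 s2"
    and i1: "\<sigma>1`{s1..t1} \<subseteq> U" and i2: "\<sigma>2`{s2..t2} \<subseteq> U"
    and nc: "(\<exists>x\<in>\<sigma>1`{s1..t1}. \<exists>y\<in>\<sigma>1`{s1..t1}. x \<noteq> y) \<or> (\<exists>x\<in>\<sigma>2`{s2..t2}. \<exists>y\<in>\<sigma>2`{s2..t2}. x \<noteq> y)"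
  shows "gp ll U (\<sigma>1 s1) (\<sigma>2 t2)"
proof -
  define \<sigma> where "\<sigma> = (\<lambda>u. if u \<le> t1 then \<sigma>1 u else \<sigma>2 (u - t1 + s2))"
  have c: "tl_piece ll \<sigma> s1 (t1 + (t2 - s2))" "\<sigma> s1 = \<sigma>1 s1" "\<sigma> (t1 + (t2 - s2)) = \<sigma>2 t2"
    "\<sigma> ` {s1..t1+(t2-s2)} = \<sigma>1`{s1..t1} \<union> \<sigma>2`{s2..t2}"
    unfolding \<sigma>_def by (rule concat[OF lp p1 p2 j])+
  have ncc: "\<exists>x\<in>\<sigma>`{s1..t1 + (t2 - s2)}. \<exists>y\<in>\<sigma>`{s1..t1 + (t2 - s2)}. x \<noteq> y"
    unfolding c(4) using nc by blast
  have fdc: "fd_timelike_curve ll \<sigma> s1 (t1 + (t2 - s2))"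
    using fd_tl_iff c(1) ncc by blast
  have im: "\<sigma>`{s1..t1 + (t2 - s2)} \<subseteq> U" unfolding c(4) using i1 i2 by (rule Un_least)
  show ?thesis unfolding gp_def
    by (rule exI[of _ \<sigma>], rule exI[of _ s1], rule exI[of _ "t1 + (t2 - s2)"]) (intro conjI fdc c(2) c(3) im)
qed

lemma fwd_gen:
  assumes lp: "lpls_on UNIV ll le tau" and g: "good_nbhd ll le tau \<Omega>" and sub: "\<Omega> \<subseteq> U"
    and x: "x \<in> \<Omega>" and z: "z \<in> \<Omega>" and xz: "le x z" and tpx: "tp ll U p x" and ne: "x \<noteq> z"
  shows "gp ll U p z"
proof (cases "gp ll U p x")
  case False
  then have "p = x" "ll x x" using tpx unfolding tp_def by auto
  then have "ll x z" using lp_ll_le[OF lp _ xz] by blast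
  then show ?thesis using good_tl[OF lp g x z _ ne] gp_mono sub \<open>p = x\<close> by blast
next
  case True
  then obtain \<sigma> s t where fd: "fd_timelike_curve ll \<sigma> s t" and e: "\<sigma> s = p" "\<sigma> t = x" and im: "\<sigma>`{s..t} \<subseteq> U"
    unfolding gp_def by blast
  have pc: "tl_piece ll \<sigma> s t" using fd fd_tl_iff by blast
  have "s < t"
  proof -
    obtain u v where "u \<in> {s..t}" "v \<in> {s..t}" "\<sigma> u \<noteq> \<sigma> v" using fd unfolding fd_timelike_curve_def by blast
    then show ?thesis
    proof -
      assume h: "u \<in> {s..t}" "v \<in> {s..t}" "\<sigma> u \<noteq> \<sigma> v"
      show "s < t"
      proof (rule ccontr)
        assume "\<not> s < t"
        then have "u = v" using h(1,2) by simp
        then show False using h(3) by simp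
      qed
    qed
  qed
  have cont: "continuous_on {s..t} \<sigma>" using pc loc_lip_cont unfolding tl_piece_def by blast
  have "open \<Omega>" using good_open[OF g] .
  then obtain r where r: "r > 0" "ball x r \<subseteq> \<Omega>" using x open_contains_ball by blast
  obtain eps where eps: "eps > 0" "\<forall>u\<in>{s..t}. dist u t < eps \<longrightarrow> dist (\<sigma> u) (\<sigma> t) < r"
    using cont[unfolded continuous_on_iff, rule_format, of t r] cont[unfolded continuous_on_iff, rule_format, of s r] r(1) \<open>s < t\<close> by auto
  define t' where "t' = max (t - eps/2) ((s+t)/2)"
  have t': "s < t'" "t' < t" "dist t' t < eps" using \<open>s < t\<close> eps(1) unfolding t'_def dist_real_def by (auto simp: max_def field_simps)
  define w where "w = \<sigma> t'"
  have "dist (\<sigma> t') (\<sigma> t) < r" using eps(2) t' \<open>s < t\<close> by auto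
  then have w: "w \<in> \<Omega>" using r(2) e(2) unfolding w_def mem_ball by (metis dist_commute subsetD mem_ball)
  have wx: "ll w x" using pc t' e unfolding tl_piece_def w_def by auto
  have wz: "ll w z" using lp_ll_le[OF lp wx xz] .
  show ?thesis
  proof (cases "w = z")
    case True
    have "ll x z" using lp_le_ll[OF lp xz] wz True by blast
    then obtain \<eta> a b where eta: "fd_timelike_curve ll \<eta> a b" "\<eta> a = x" "\<eta> b = z" "\<eta>`{a..b} \<subseteq> \<Omega>"
      using good_tl[OF lp g x z _ ne] unfolding gp_def by blast
    have pe: "tl_piece ll \<eta> a b" and ne2: "\<exists>x\<in>\<eta>`{a..b}. \<exists>y\<in>\<eta>`{a..b}. x \<noteq> y"
      using eta(1) fd_tl_iff by blast+
    have ie: "\<eta>`{a..b} \<subseteq> U" using eta(4) sub by (rule subset_trans)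
    have jj: "\<sigma> t = \<eta> a" using e(2) eta(2) by simp
    have "gp ll U (\<sigma> s) (\<eta> b)" by (rule concat_gp[OF lp pc pe jj im ie disjI2[OF ne2]])
    then show ?thesis using e eta by simp
  next
    case False
    then obtain \<eta> a b where eta: "fd_timelike_curve ll \<eta> a b" "\<eta> a = w" "\<eta> b = z" "\<eta>`{a..b} \<subseteq> \<Omega>"
      using good_tl[OF lp g w z wz] unfolding gp_def by blast
    have pc': "tl_piece ll \<sigma> s t'" using tl_piece_restrict[OF pc] t' by auto
    have pe: "tl_piece ll \<eta> a b" and ne2: "\<exists>x\<in>\<eta>`{a..b}. \<exists>y\<in>\<eta>`{a..b}. x \<noteq> y"
      using eta(1) fd_tl_iff by blast+
    have ie: "\<eta>`{a..b} \<subseteq> U" using eta(4) sub by (rule subset_trans)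
    have jj: "\<sigma> t' = \<eta> a" using w_def eta(2) by simp
    have im': "\<sigma>`{s..t'} \<subseteq> U" using im t'(2) by (meson atLeastAtMost_iff image_mono order_trans subsetI order_less_imp_le subset_trans)
    have "gp ll U (\<sigma> s) (\<eta> b)" by (rule concat_gp[OF lp pc' pe jj im' ie disjI2[OF ne2]])
    then show ?thesis using e eta by simp
  qed
qed

lemma bwd_gen:
  assumes lp: "lpls_on UNIV ll le tau" and g: "good_nbhd ll le tau \<Omega>" and sub: "\<Omega> \<subseteq> U"
    and x: "x \<in> \<Omega>" and z: "z \<in> \<Omega>" and zx: "le z x" and tpx: "tp ll U x q" and ne: "x \<noteq> z"
  shows "gp ll U z q"
proof (cases "gp ll U x q")
  case False
  then have "q = x" "ll x x" using tpx unfolding tp_def by auto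
  then have "ll z x" using lp_le_ll[OF lp zx] by blast
  then show ?thesis using good_tl[OF lp g z x _ ne[symmetric]] gp_mono sub \<open>q = x\<close> by blast
next
  case True
  then obtain \<sigma> s t where fd: "fd_timelike_curve ll \<sigma> s t" and e: "\<sigma> s = x" "\<sigma> t = q" and im: "\<sigma>`{s..t} \<subseteq> U"
    unfolding gp_def by blast
  have pc: "tl_piece ll \<sigma> s t" using fd fd_tl_iff by blast
  have "s < t"
  proof -
    obtain u v where "u \<in> {s..t}" "v \<in> {s..t}" "\<sigma> u \<noteq> \<sigma> v" using fd unfolding fd_timelike_curve_def by blast
    then show ?thesis
    proof -
      assume h: "u \<in> {s..t}" "v \<in> {s..t}" "\<sigma> u \<noteq> \<sigma> v"
      show "s < t"
      proof (rule ccontr)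
        assume "\<not> s < t"
        then have "u = v" using h(1,2) by simp
        then show False using h(3) by simp
      qed
    qed
  qed
  have cont: "continuous_on {s..t} \<sigma>" using pc loc_lip_cont unfolding tl_piece_def by blast
  have "open \<Omega>" using good_open[OF g] .
  then obtain r where r: "r > 0" "ball x r \<subseteq> \<Omega>" using x open_contains_ball by blast
  obtain eps where eps: "eps > 0" "\<forall>u\<in>{s..t}. dist u s < eps \<longrightarrow> dist (\<sigma> u) (\<sigma> s) < r"
    using cont[unfolded continuous_on_iff, rule_format, of t r] cont[unfolded continuous_on_iff, rule_format, of s r] r(1) \<open>s < t\<close> by auto
  define s' where "s' = min (s + eps/2) ((s+t)/2)"
  have s': "s < s'" "s' < t" "dist s' s < eps" using \<open>s < t\<close> eps(1) unfolding s'_def dist_real_def by (auto simp: min_def field_simps)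
  define w where "w = \<sigma> s'"
  have "dist (\<sigma> s') (\<sigma> s) < r" using eps(2) s' \<open>s < t\<close> by auto
  then have w: "w \<in> \<Omega>" using r(2) e(1) unfolding w_def mem_ball by (metis dist_commute subsetD mem_ball)
  have xw: "ll x w" using pc s' e unfolding tl_piece_def w_def by auto
  have zw: "ll z w" using lp_le_ll[OF lp zx xw] .
  show ?thesis
  proof (cases "w = z")
    case True
    have "ll z x" using lp_ll_le[OF lp _ zx] zw True by blast
    then obtain \<eta> a b where eta: "fd_timelike_curve ll \<eta> a b" "\<eta> a = z" "\<eta> b = x" "\<eta>`{a..b} \<subseteq> \<Omega>"
      using good_tl[OF lp g z x _ ne[symmetric]] unfolding gp_def by blast
    have pe: "tl_piece ll \<eta> a b" and ne2: "\<exists>x\<in>\<eta>`{a..b}. \<exists>y\<in>\<eta>`{a..b}. x \<noteq> y"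
      using eta(1) fd_tl_iff by blast+
    have ie: "\<eta>`{a..b} \<subseteq> U" using eta(4) sub by (rule subset_trans)
    have jj: "\<eta> b = \<sigma> s" using e(1) eta(3) by simp
    have "gp ll U (\<eta> a) (\<sigma> t)" by (rule concat_gp[OF lp pe pc jj ie im disjI1[OF ne2]])
    then show ?thesis using e eta by simp
  next
    case False
    then obtain \<eta> a b where eta: "fd_timelike_curve ll \<eta> a b" "\<eta> a = z" "\<eta> b = w" "\<eta>`{a..b} \<subseteq> \<Omega>"
      using good_tl[OF lp g z w zw] unfolding gp_def by metis
    have pc': "tl_piece ll \<sigma> s' t" using tl_piece_restrict[OF pc] s' by auto
    have pe: "tl_piece ll \<eta> a b" and ne2: "\<exists>x\<in>\<eta>`{a..b}. \<exists>y\<in>\<eta>`{a..b}. x \<noteq> y"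
      using eta(1) fd_tl_iff by blast+
    have ie: "\<eta>`{a..b} \<subseteq> U" using eta(4) sub by (rule subset_trans)
    have jj: "\<eta> b = \<sigma> s'" using w_def eta(3) by simp
    have im': "\<sigma>`{s'..t} \<subseteq> U" using im s'(1) by (meson atLeastAtMost_iff image_mono order_trans subsetI order_less_imp_le subset_trans)
    have "gp ll U (\<eta> a) (\<sigma> t)" by (rule concat_gp[OF lp pe pc' jj ie im' disjI1[OF ne2]])
    then show ?thesis using e eta by simp
  qed
qed



lemma real_ind_fwd:
  fixes P :: "real \<Rightarrow> bool"
  assumes "t0 \<le> b" "P t0"
    and ext: "\<And>t. t \<in> {t0..b} \<Longrightarrow> \<exists>d>0. \<forall>t' u. t0 \<le> t' \<and> t' \<le> u \<and> u \<le> b \<and> t - d < t' \<and> u < t + d \<and> P t' \<longrightarrow> P u"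
  shows "P b"
proof (rule ccontr)
  assume nb: "\<not> P b"
  define S where "S = {u\<in>{t0..b}. \<not> P u}"
  have bS: "b \<in> S" using nb assms(1) by (simp add: S_def)
  have bdd: "bdd_below S" unfolding S_def by (rule bdd_belowI[of _ t0]) auto
  define m where "m = Inf S"
  have lower: "\<And>u. u \<in> S \<Longrightarrow> m \<le> u" unfolding m_def using bdd by (simp add: cInf_lower)
  have mt0: "t0 \<le> m" unfolding m_def using bS by (intro cInf_greatest) (auto simp: S_def)
  have mb: "m \<le> b" using lower[OF bS] .
  obtain d where d: "d > 0" and D: "\<forall>t' u. t0 \<le> t' \<and> t' \<le> u \<and> u \<le> b \<and> m - d < t' \<and> u < m + d \<and> P t' \<longrightarrow> P u"
    using ext[of m] mt0 mb by auto
  define t' where "t' = max t0 (m - d/2)"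
  have t'1: "t0 \<le> t'" "t' \<le> m" "m - d < t'" using d mt0 by (auto simp: t'_def)
  have Pt': "P t'"
  proof (cases "t' = t0")
    case True then show ?thesis using assms(2) by simp
  next
    case False
    then have "t' < m" using t'1 by (auto simp: t'_def)
    then have "t' \<notin> S" using lower by force
    then show ?thesis using t'1 mb by (auto simp: S_def)
  qed
  have ne: "S \<noteq> {}" using bS by blast
  have "\<exists>u\<in>S. u < m + d" using cInf_less_iff[OF ne bdd, of "m+d"] d m_def by simp
  then obtain u where u: "u \<in> S" "u < m + d" by blast
  have ub: "u \<le> b" using u(1) by (simp add: S_def)
  have "P u" using D[rule_format, of t' u] t'1(1) t'1(3) order_trans[OF t'1(2) lower[OF u(1)]] ub u(2) Pt' by blast
  then show False using u(1) by (simp add: S_def)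
qed

lemma real_ind_bwd:
  fixes P :: "real \<Rightarrow> bool"
  assumes "a0 \<le> b0" "P b0"
    and ext: "\<And>t. t \<in> {a0..b0} \<Longrightarrow> \<exists>d>0. \<forall>t' u. a0 \<le> u \<and> u \<le> t' \<and> t' \<le> b0 \<and> t - d < u \<and> t' < t + d \<and> P t' \<longrightarrow> P u"
  shows "P a0"
proof -
  have "(\<lambda>v. P (- v)) (- a0)"
  proof (rule real_ind_fwd[of "- b0" "- a0"])
    show "- b0 \<le> - a0" using assms(1) by simp
    show "P (- (- b0))" using assms(2) by simp
  next
    fix t assume t: "t \<in> {- b0..- a0}"
    then obtain d where d: "d > 0" and D: "\<forall>t' u. a0 \<le> u \<and> u \<le> t' \<and> t' \<le> b0 \<and> - t - d < u \<and> t' < - t + d \<and> P t' \<longrightarrow> P u"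
      using ext[of "- t"] by auto
    show "\<exists>d>0. \<forall>t' u. - b0 \<le> t' \<and> t' \<le> u \<and> u \<le> - a0 \<and> t - d < t' \<and> u < t + d \<and> P (- t') \<longrightarrow> P (- u)"
    proof (intro exI[of _ d] conjI allI impI d)
      fix t' u assume "- b0 \<le> t' \<and> t' \<le> u \<and> u \<le> - a0 \<and> t - d < t' \<and> u < t + d \<and> P (- t')"
      then show "P (- u)" using D[rule_format, of "- u" "- t'"] by auto
    qed
  qed
  then show ?thesis by simp
qed

lemma fwd_run:
  fixes a b t0 t1 :: real
  assumes win: "\<forall>t\<in>{a..b}. \<exists>\<Omega> d. d > 0 \<and> \<Omega> \<in> G \<and> (\<forall>u\<in>{a..b}. dist u t < d \<longrightarrow> \<gamma> u \<in> \<Omega>)"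
    and step: "\<And>\<Omega> x z. \<Omega> \<in> G \<Longrightarrow> x \<in> \<Omega> \<Longrightarrow> z \<in> \<Omega> \<Longrightarrow> le x z \<Longrightarrow> R x \<Longrightarrow> R z"
    and mono: "\<And>s t. a \<le> s \<Longrightarrow> s \<le> t \<Longrightarrow> t \<le> b \<Longrightarrow> le (\<gamma> s) (\<gamma> t)"
    and r: "a \<le> t0" "t0 \<le> t1" "t1 \<le> b" "R (\<gamma> t0)"
  shows "R (\<gamma> t1)"
proof (rule real_ind_fwd[of t0 t1 "\<lambda>u. R (\<gamma> u)"])
  show "t0 \<le> t1" "R (\<gamma> t0)" using r by auto
next
  fix t assume t: "t \<in> {t0..t1}"
  then have tab: "t \<in> {a..b}" using r by auto
  then obtain \<Omega> d where d: "d > 0" "\<Omega> \<in> G" "\<forall>u\<in>{a..b}. dist u t < d \<longrightarrow> \<gamma> u \<in> \<Omega>"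
    using win by blast
  show "\<exists>d>0. \<forall>t' u. t0 \<le> t' \<and> t' \<le> u \<and> u \<le> t1 \<and> t - d < t' \<and> u < t + d \<and> R (\<gamma> t') \<longrightarrow> R (\<gamma> u)"
  proof (intro exI[of _ d] conjI allI impI d(1))
    fix t' u assume h: "t0 \<le> t' \<and> t' \<le> u \<and> u \<le> t1 \<and> t - d < t' \<and> u < t + d \<and> R (\<gamma> t')"
    have "t' \<in> {a..b}" "u \<in> {a..b}" "dist t' t < d" "dist u t < d" using h t r unfolding dist_real_def by auto
    then have "\<gamma> t' \<in> \<Omega>" "\<gamma> u \<in> \<Omega>" using d(3) by blast+
    moreover have "le (\<gamma> t') (\<gamma> u)" using mono h r by auto
    ultimately show "R (\<gamma> u)" using step[OF d(2)] h by blast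
  qed
qed

lemma bwd_run:
  fixes a b t0 t1 :: real
  assumes win: "\<forall>t\<in>{a..b}. \<exists>\<Omega> d. d > 0 \<and> \<Omega> \<in> G \<and> (\<forall>u\<in>{a..b}. dist u t < d \<longrightarrow> \<gamma> u \<in> \<Omega>)"
    and step: "\<And>\<Omega> x z. \<Omega> \<in> G \<Longrightarrow> x \<in> \<Omega> \<Longrightarrow> z \<in> \<Omega> \<Longrightarrow> le z x \<Longrightarrow> R x \<Longrightarrow> R z"
    and mono: "\<And>s t. a \<le> s \<Longrightarrow> s \<le> t \<Longrightarrow> t \<le> b \<Longrightarrow> le (\<gamma> s) (\<gamma> t)"
    and r: "a \<le> t0" "t0 \<le> t1" "t1 \<le> b" "R (\<gamma> t1)"
  shows "R (\<gamma> t0)"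
proof (rule real_ind_bwd[of t0 t1 "\<lambda>u. R (\<gamma> u)"])
  show "t0 \<le> t1" "R (\<gamma> t1)" using r by auto
next
  fix t assume t: "t \<in> {t0..t1}"
  then have tab: "t \<in> {a..b}" using r by auto
  then obtain \<Omega> d where d: "d > 0" "\<Omega> \<in> G" "\<forall>u\<in>{a..b}. dist u t < d \<longrightarrow> \<gamma> u \<in> \<Omega>"
    using win by blast
  show "\<exists>d>0. \<forall>t' u. t0 \<le> u \<and> u \<le> t' \<and> t' \<le> t1 \<and> t - d < u \<and> t' < t + d \<and> R (\<gamma> t') \<longrightarrow> R (\<gamma> u)"
  proof (intro exI[of _ d] conjI allI impI d(1))
    fix t' u assume h: "t0 \<le> u \<and> u \<le> t' \<and> t' \<le> t1 \<and> t - d < u \<and> t' < t + d \<and> R (\<gamma> t')"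
    have "t' \<in> {a..b}" "u \<in> {a..b}" "dist t' t < d" "dist u t < d" using h t r unfolding dist_real_def by auto
    then have "\<gamma> t' \<in> \<Omega>" "\<gamma> u \<in> \<Omega>" using d(3) by blast+
    moreover have "le (\<gamma> u) (\<gamma> t')" using mono h r by auto
    ultimately show "R (\<gamma> u)" using step[OF d(2)] h by blast
  qed
qed



lemma main:
  fixes \<gamma> :: "real \<Rightarrow> 'a::metric_space" and a b c d :: real
  assumes lp: "lpls_on UNIV ll le tau" and fd: "fd_causal_curve le \<gamma> a b"
    and ac: "a \<le> c" and cd: "c < d" and db: "d \<le> b" and rect: "rectifiable_on tau \<gamma> c d"
    and cover: "\<forall>t\<in>{a..b}. \<exists>\<Omega>. \<gamma> t \<in> \<Omega> \<and> \<Omega> \<subseteq> U \<and> good_nbhd ll le tau \<Omega>"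
  shows "gp ll U (\<gamma> a) (\<gamma> b)"
proof -
  define G where "G = {\<Omega>. \<Omega> \<subseteq> U \<and> good_nbhd ll le tau \<Omega>}"
  have mono: "le (\<gamma> s) (\<gamma> t)" if "a \<le> s" "s \<le> t" "t \<le> b" for s t
  proof (cases "s = t")
    case True then show ?thesis using lp_refl[OF lp] by simp
  next
    case False then show ?thesis using fd that unfolding fd_causal_curve_def by auto
  qed
  have cont: "continuous_on {a..b} \<gamma>" using fd loc_lip_cont unfolding fd_causal_curve_def by blast
  have win: "\<forall>t\<in>{a..b}. \<exists>\<Omega> d. d > 0 \<and> \<Omega> \<in> G \<and> (\<forall>u\<in>{a..b}. dist u t < d \<longrightarrow> \<gamma> u \<in> \<Omega>)"
  proof
    fix t assume t: "t \<in> {a..b}"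
    then obtain \<Omega> where \<Omega>: "\<gamma> t \<in> \<Omega>" "\<Omega> \<subseteq> U" "good_nbhd ll le tau \<Omega>" using cover by blast
    have "open \<Omega>" using good_open[OF \<Omega>(3)] .
    then obtain r where r: "r > 0" "ball (\<gamma> t) r \<subseteq> \<Omega>" using \<Omega>(1) open_contains_ball by blast
    obtain e where e: "e > 0" "\<forall>u\<in>{a..b}. dist u t < e \<longrightarrow> dist (\<gamma> u) (\<gamma> t) < r"
      using cont t r(1) unfolding continuous_on_iff by blast
    have "\<forall>u\<in>{a..b}. dist u t < e \<longrightarrow> \<gamma> u \<in> \<Omega>" using e(2) r(2) by (auto simp: dist_commute)
    then show "\<exists>\<Omega> d. d > 0 \<and> \<Omega> \<in> G \<and> (\<forall>u\<in>{a..b}. dist u t < d \<longrightarrow> \<gamma> u \<in> \<Omega>)"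
      using e(1) \<Omega> G_def by blast
  qed
  have rect_ll: "ll (\<gamma> t1) (\<gamma> t2)" if "c \<le> t1" "t1 < t2" "t2 \<le> d" for t1 t2
  proof -
    define tt where "tt = (\<lambda>i::nat. if i = 0 then t1 else t2)"
    have "is_partition t1 t2 1 tt" using that unfolding is_partition_def tt_def by auto
    then have "(\<Sum>i<1. tau (\<gamma> (tt i)) (\<gamma> (tt (Suc i)))) \<in> {(\<Sum>i<n. tau (\<gamma> (t i)) (\<gamma> (t (Suc i)))) | n t. is_partition t1 t2 n t}"
      by blast
    moreover have "(\<Sum>i<1. tau (\<gamma> (tt i)) (\<gamma> (tt (Suc i)))) = tau (\<gamma> t1) (\<gamma> t2)"
      by (simp add: tt_def)
    ultimately have "L_tau tau \<gamma> t1 t2 \<le> tau (\<gamma> t1) (\<gamma> t2)"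
      unfolding L_tau_def by (metis (no_types, lifting) Inf_lower)
    moreover have "0 < L_tau tau \<gamma> t1 t2" using rect that unfolding rectifiable_on_def by auto
    ultimately show ?thesis using lp_pos[OF lp] by (metis order_less_le_trans)
  qed
  have stepF_tp: "tp ll U p z" if "\<Omega> \<in> G" "x \<in> \<Omega>" "z \<in> \<Omega>" "le x z" "tp ll U p x" for \<Omega> x z p
  proof (cases "x = z")
    case True then show ?thesis using that by simp
  next
    case False then show ?thesis using fwd_gen[OF lp _ _ that(2,3,4,5)] that(1) unfolding G_def tp_def by blast
  qed
  have stepF_gp: "gp ll U p z" if "\<Omega> \<in> G" "x \<in> \<Omega>" "z \<in> \<Omega>" "le x z" "gp ll U p x" for \<Omega> x z p
  proof (cases "x = z")
    case True then show ?thesis using that by simp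
  next
    case False then show ?thesis using fwd_gen[OF lp _ _ that(2,3,4) _ False] that(1,5) unfolding G_def tp_def by blast
  qed
  have stepB_tp: "tp ll U z q" if "\<Omega> \<in> G" "x \<in> \<Omega>" "z \<in> \<Omega>" "le z x" "tp ll U x q" for \<Omega> x z q
  proof (cases "x = z")
    case True then show ?thesis using that by simp
  next
    case False then show ?thesis using bwd_gen[OF lp _ _ that(2,3,4,5) False] that(1) unfolding G_def tp_def by blast
  qed
  obtain \<Omega>c dc where wc: "dc > 0" "\<Omega>c \<in> G" "\<forall>u\<in>{a..b}. dist u c < dc \<longrightarrow> \<gamma> u \<in> \<Omega>c"
    using win[rule_format, of c] ac cd db by auto
  define t0 where "t0 = min d (c + dc/2)"
  have t0: "c < t0" "t0 \<le> d" "dist t0 c < dc" using cd wc(1) by (auto simp: t0_def dist_real_def)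
  have inO: "\<gamma> c \<in> \<Omega>c" "\<gamma> t0 \<in> \<Omega>c" using wc(3) t0 ac cd db wc(1) by auto
  have llc: "ll (\<gamma> c) (\<gamma> t0)" using rect_ll[of c t0] t0 by auto
  have tp0: "tp ll U (\<gamma> c) (\<gamma> t0)"
  proof (cases "\<gamma> c = \<gamma> t0")
    case True then show ?thesis using llc unfolding tp_def by simp
  next
    case False
    then have "gp ll \<Omega>c (\<gamma> c) (\<gamma> t0)" using good_tl[OF lp _ inO llc] wc(2) unfolding G_def by blast
    then show ?thesis using gp_mono wc(2) unfolding G_def tp_def by blast
  qed
  have tpcb: "tp ll U (\<gamma> c) (\<gamma> b)"
    by (rule fwd_run[where \<gamma>=\<gamma> and le=le and G=G and R="tp ll U (\<gamma> c)" and a=a and b=b and ?t0.0=t0 and ?t1.0=b, OF win stepF_tp mono]) (use t0 ac db tp0 in auto)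
  have tpab: "tp ll U (\<gamma> a) (\<gamma> b)"
    by (rule bwd_run[where \<gamma>=\<gamma> and le=le and G=G and R="\<lambda>y. tp ll U y (\<gamma> b)" and a=a and b=b and ?t0.0=a and ?t1.0=c, OF win stepB_tp mono]) (use ac cd db tpcb in auto)
  show ?thesis
  proof (cases "gp ll U (\<gamma> a) (\<gamma> b)")
    case True then show ?thesis .
  next
    case False
    then have eq: "\<gamma> b = \<gamma> a" and llx: "ll (\<gamma> a) (\<gamma> a)" using tpab unfolding tp_def by auto
    obtain u v where uv: "u \<in> {a..b}" "v \<in> {a..b}" "\<gamma> u \<noteq> \<gamma> v"
      using fd unfolding fd_causal_curve_def by blast
    obtain ts where ts: "ts \<in> {a..b}" "\<gamma> ts \<noteq> \<gamma> a"
    proof (cases "\<gamma> u = \<gamma> a")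
      case True then show ?thesis using that uv by auto
    next
      case False then show ?thesis using that uv by auto
    qed
    have "tp ll U (\<gamma> a) (\<gamma> ts)"
      by (rule fwd_run[where \<gamma>=\<gamma> and le=le and G=G and R="tp ll U (\<gamma> a)" and a=a and b=b and ?t0.0=a and ?t1.0=ts, OF win stepF_tp mono]) (use ts llx in \<open>auto simp: tp_def\<close>)
    then have gts: "gp ll U (\<gamma> a) (\<gamma> ts)" using ts unfolding tp_def by auto
    have "gp ll U (\<gamma> a) (\<gamma> b)"
      by (rule fwd_run[where \<gamma>=\<gamma> and le=le and G=G and R="gp ll U (\<gamma> a)" and a=a and b=b and ?t0.0=ts and ?t1.0=b, OF win stepF_gp mono]) (use ts gts in auto)
    then show ?thesis using False by simp
  qed
qed


theorem corollary3p21: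
  fixes ll le :: "'a::metric_space \<Rightarrow> 'a \<Rightarrow> bool"
    and tau :: "'a \<Rightarrow> 'a \<Rightarrow> ennreal"
    and \<gamma> :: "real \<Rightarrow> 'a"
    and a b c d :: real
  assumes "lpls_on UNIV ll le tau"
    and "regularly_localizable ll le tau"
    and "fd_causal_curve le \<gamma> a b"
    and "a \<le> c" and "c < d" and "d \<le> b"
    and "rectifiable_on tau \<gamma> c d"
  shows "(\<exists>\<sigma> s t. fd_timelike_curve ll \<sigma> s t \<and> \<sigma> s = \<gamma> a \<and> \<sigma> t = \<gamma> b) \<and>
         (SR_localizable ll le tau \<longrightarrow>
            (\<forall>U. open U \<and> \<gamma> ` {a..b} \<subseteq> U \<longrightarrow>
               (\<exists>\<sigma> s t. fd_timelike_curve ll \<sigma> s t \<and> \<sigma> s = \<gamma> a \<and> \<sigma> t = \<gamma> b \<and> \<sigma> ` {s..t} \<subseteq> U)))"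
proof
  show "\<exists>\<sigma> s t. fd_timelike_curve ll \<sigma> s t \<and> \<sigma> s = \<gamma> a \<and> \<sigma> t = \<gamma> b"
  proof -
    have "\<forall>t\<in>{a..b}. \<exists>\<Omega>. \<gamma> t \<in> \<Omega> \<and> \<Omega> \<subseteq> UNIV \<and> good_nbhd ll le tau \<Omega>"
      using assms(2) unfolding regularly_localizable_def by blast
    then have "gp ll UNIV (\<gamma> a) (\<gamma> b)" using main[OF assms(1,3,4,5,6,7)] by blast
    then show ?thesis unfolding gp_def by blast
  qed
  show "SR_localizable ll le tau \<longrightarrow>
            (\<forall>U. open U \<and> \<gamma> ` {a..b} \<subseteq> U \<longrightarrow>
               (\<exists>\<sigma> s t. fd_timelike_curve ll \<sigma> s t \<and> \<sigma> s = \<gamma> a \<and> \<sigma> t = \<gamma> b \<and> \<sigma> ` {s..t} \<subseteq> U))"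
  proof (intro impI allI)
    fix U assume sr: "SR_localizable ll le tau" and U: "open U \<and> \<gamma> ` {a..b} \<subseteq> U"
    have "\<forall>t\<in>{a..b}. \<exists>\<Omega>. \<gamma> t \<in> \<Omega> \<and> \<Omega> \<subseteq> U \<and> good_nbhd ll le tau \<Omega>"
      using sr U unfolding SR_localizable_def by blast
    then have "gp ll U (\<gamma> a) (\<gamma> b)" using main[OF assms(1,3,4,5,6,7)] by blast
    then show "\<exists>\<sigma> s t. fd_timelike_curve ll \<sigma> s t \<and> \<sigma> s = \<gamma> a \<and> \<sigma> t = \<gamma> b \<and> \<sigma> ` {s..t} \<subseteq> U"
      unfolding gp_def by blast
  qed
qed

end
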